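(* The class of weak betweenness algebras is not closed under (direct) products.
   Context: A PS-algebra is $\langle A,f,g\rangle$ where $A$ is a Boolean algebra with at least two elements (operations $+,\cdot,-,0,1$) and $f,g\colon A^2\to A$ satisfy: $f(x,y)=0$ whenever $x=0$ or $y=0$; $f$ is additive in each argument; $g(x,y)=1$ whenever $x=0$ or $y=0$; $g$ is co-additive in each argument ($g(x+x',y)=g(x,y)\cdot g(x',y)$, $g(x,y+y')=g(x,y)\cdot g(x,y')$). A weak betweenness algebra is a PS-algebra satisfying for all $x,y,z,a$: (ABT0) $x\leq f(x,x)$; (ABT1$_f$) $f(x,y)\leq f(y,x)$; (ABT1$_g$) $g(x,y)\leq g(y,x)$; (ABT2) $y\cdot f(x,z)\leq f(x\cdot f(x,y),z)$; (ABTW) $a\neq0\Rightarrow g(a,a)\leq a$. Products are taken componentwise. *)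

theory Defs
  imports Main "HOL-Library.Product_Order"
begin

text \<open>Boolean algebra operations: sup (+), inf (\<cdot>), uminus (-), bot (0), top (1).
  Algebras are represented on a type of class boolean_algebra; the products of
  Boolean algebras are given by the componentwise instance from Product_Order.\<close>

definition ps_algebra :: "('a::boolean_algebra \<Rightarrow> 'a \<Rightarrow> 'a) \<Rightarrow> ('a \<Rightarrow> 'a \<Rightarrow> 'a) \<Rightarrow> bool" where
  "ps_algebra f g \<longleftrightarrow>
     (bot::'a) \<noteq> top \<and>
     (\<forall>x y. (x = bot \<or> y = bot) \<longrightarrow> f x y = bot) \<and>
     (\<forall>x x' y. f (sup x x') y = sup (f x y) (f x' y)) \<and>
     (\<forall>x y y'. f x (sup y y') = sup (f x y) (f x y')) \<and>
     (\<forall>x y. (x = bot \<or> y = bot) \<longrightarrow> g x y = top) \<and>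
     (\<forall>x x' y. g (sup x x') y = inf (g x y) (g x' y)) \<and>
     (\<forall>x y y'. g x (sup y y') = inf (g x y) (g x y'))"

definition weak_betweenness_algebra ::
  "('a::boolean_algebra \<Rightarrow> 'a \<Rightarrow> 'a) \<Rightarrow> ('a \<Rightarrow> 'a \<Rightarrow> 'a) \<Rightarrow> bool" where
  "weak_betweenness_algebra f g \<longleftrightarrow>
     ps_algebra f g \<and>
     (\<forall>x. x \<le> f x x) \<and>
     (\<forall>x y. f x y \<le> f y x) \<and>
     (\<forall>x y. g x y \<le> g y x) \<and>
     (\<forall>x y z. inf y (f x z) \<le> f (inf x (f x y)) z) \<and>
     (\<forall>a. a \<noteq> bot \<longrightarrow> g a a \<le> a)"

definition prod_op :: "('a \<Rightarrow> 'a \<Rightarrow> 'a) \<Rightarrow> ('b \<Rightarrow> 'b \<Rightarrow> 'b) \<Rightarrow>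
    ('a \<times> 'b) \<Rightarrow> ('a \<times> 'b) \<Rightarrow> ('a \<times> 'b)" where
  "prod_op f1 f2 p q = (f1 (fst p) (fst q), f2 (snd p) (snd q))"

end

theory Submission
  imports Defs
begin

theorem proposition38:
  shows "\<exists>(f1::bool \<Rightarrow> bool \<Rightarrow> bool) g1 (f2::bool \<Rightarrow> bool \<Rightarrow> bool) g2.
           weak_betweenness_algebra f1 g1 \<and> weak_betweenness_algebra f2 g2 \<and>
           \<not> weak_betweenness_algebra (prod_op f1 f2) (prod_op g1 g2)"
proof -
  have w: "weak_betweenness_algebra (\<lambda>x y::bool. x \<and> y) (\<lambda>_ _. True)"
    unfolding weak_betweenness_algebra_def ps_algebra_def by auto
  have n: "\<not> weak_betweenness_algebra (prod_op (\<lambda>x y::bool. x \<and> y) (\<lambda>x y::bool. x \<and> y))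
              (prod_op (\<lambda>_ _. True) (\<lambda>_ _. True))"
  proof
    assume "weak_betweenness_algebra (prod_op (\<lambda>x y::bool. x \<and> y) (\<lambda>x y::bool. x \<and> y))
              (prod_op (\<lambda>_ _. True) (\<lambda>_ _. True))"
    then have "prod_op (\<lambda>_ _. True) (\<lambda>_ _. True) (True, False) (True, False) \<le> (True, False)"
      unfolding weak_betweenness_algebra_def by (auto simp: bot_prod_def)
    then show False by (simp add: prod_op_def less_eq_prod_def)
  qed
  from w n show ?thesis by blast
qed

end
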